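(* Let $H$ be a real Hilbert space with inner product $(\cdot,\cdot)_H$, let $F:H\to\mathbb{R}$ be continuously Fréchet differentiable with gradient $\nabla F$, and for each $\Phi\in H$ let $\mathbf{L}(\Phi)=\mathbf{M}(\Phi)+\mathbf{S}(\Phi)$ with $\mathbf{M}(\Phi)$ a symmetric and $\mathbf{S}(\Phi)$ a skew-symmetric linear operator on $H$. Let $I_{n+\frac12}=[t_n,t_{n+1}]$, let $s\ge 1$, and let $\Phi^n\in H$ be given. Suppose $\Phi_h\in\mathbb{P}_s(I_{n+\frac12})\otimes H$ with $\Phi_h(t_n)=\Phi^n$ and $\mu_h\in\mathbb{P}_{s-1}(I_{n+\frac12})\otimes H$ satisfy, for all $U_h,\nu_h\in\mathbb{P}_{s-1}(I_{n+\frac12})\otimes H$, $$\int_{I_{n+\frac12}}(\dot\Phi_h,U_h)_H\,dt=\int_{I_{n+\frac12}}(\mathbf{L}(\Phi_h)\mu_h,U_h)_H\,dt,\qquad \int_{I_{n+\frac12}}(\mu_h,\nu_h)_H\,dt=\int_{I_{n+\frac12}}(\nabla F(\Phi_h),\nu_h)_H\,dt,$$ (all integrands assumed integrable). Setting $\Phi^{n+1}=\Phi_h(t_{n+1})$, one has $$F(\Phi^{n+1})-F(\Phi^n)=\int_{I_{n+\frac12}}\big(\mathbf{M}(\Phi_h)\mu_h,\mu_h\big)_H\,dt.$$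
   Context: $\mathbb{P}_s(I)$ denotes the space of real polynomials on the interval $I$ of degree at most $s$, and $\mathbb{P}_s(I)\otimes H$ the $H$-valued polynomials in $t$ of degree at most $s$. Symmetric/skew-symmetric: $(\mathbf{A}\Phi,\Psi)_H=\pm(\Phi,\mathbf{A}\Psi)_H$ for all $\Phi,\Psi$. *)

theory Defs
  imports "HOL-Analysis.Analysis"
begin

text \<open>H-valued polynomials in t of degree at most s (as functions on the reals;
  their restriction to a nondegenerate interval determines them).\<close>
definition polyH :: "nat \<Rightarrow> (real \<Rightarrow> 'a::real_vector) set" where
  "polyH s = {p. \<exists>c :: nat \<Rightarrow> 'a. \<forall>t. p t = (\<Sum>k\<le>s. (t ^ k) *\<^sub>R c k)}"

definition symmetric_op :: "('a::real_inner \<Rightarrow> 'a) \<Rightarrow> bool" where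
  "symmetric_op A \<longleftrightarrow> (\<forall>x y. inner (A x) y = inner x (A y))"

definition skew_symmetric_op :: "('a::real_inner \<Rightarrow> 'a) \<Rightarrow> bool" where
  "skew_symmetric_op A \<longleftrightarrow> (\<forall>x y. inner (A x) y = - inner x (A y))"

end

theory Submission
  imports Defs
begin

lemma poly_vderiv:
  fixes c :: "nat \<Rightarrow> 'a::real_normed_vector"
  shows "((\<lambda>t. \<Sum>k\<le>s. (t ^ k) *\<^sub>R c k) has_vector_derivative
          (\<Sum>k\<le>s. (real k * t ^ (k - 1)) *\<^sub>R c k)) (at t)"
proof -
  have "((\<lambda>t. (t ^ k) *\<^sub>R c k) has_vector_derivative (real k * t ^ (k - 1)) *\<^sub>R c k) (at t)" for k
  proof -
    have "((\<lambda>t. t ^ k) has_real_derivative real k * t ^ (k - 1)) (at t)"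
      by (rule derivative_eq_intros refl)+ simp
    from has_vector_derivative_scaleR[OF this has_vector_derivative_const[of "c k"]] show ?thesis by simp
  qed
  then show ?thesis by (intro has_vector_derivative_sum) auto
qed

lemma poly_deriv_in:
  fixes c :: "nat \<Rightarrow> 'a::real_normed_vector"
  assumes "s \<ge> 1"
  shows "(\<lambda>t. \<Sum>k\<le>s. (real k * t ^ (k - 1)) *\<^sub>R c k) \<in> polyH (s - 1)"
proof -
  obtain n where n: "s = Suc n" using assms by (cases s) auto
  have "(\<Sum>k\<le>s. (real k * t ^ (k - 1)) *\<^sub>R c k) = (\<Sum>k\<le>n. (t ^ k) *\<^sub>R ((real (Suc k)) *\<^sub>R c (Suc k)))" for t
    unfolding n sum.atMost_Suc_shift by (simp add: algebra_simps)
  then show ?thesis unfolding polyH_def using n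
    by (intro CollectI exI[of _ "\<lambda>k. (real (Suc k)) *\<^sub>R c (Suc k)"]) auto
qed

theorem theorem3p2:
  fixes F :: "'a::{real_inner, complete_space} \<Rightarrow> real"
    and gradF :: "'a \<Rightarrow> 'a"
    and M S :: "'a \<Rightarrow> 'a \<Rightarrow> 'a"
    and tn tn1 :: real and s :: nat
    and Phin :: 'a and Phih muh :: "real \<Rightarrow> 'a"
  assumes grad: "\<And>x. (F has_derivative (\<lambda>v. inner (gradF x) v)) (at x)"
    and grad_cont: "continuous_on UNIV gradF"
    and M_lin: "\<And>\<Phi>. linear (M \<Phi>)" and M_sym: "\<And>\<Phi>. symmetric_op (M \<Phi>)"
    and S_lin: "\<And>\<Phi>. linear (S \<Phi>)" and S_skew: "\<And>\<Phi>. skew_symmetric_op (S \<Phi>)"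
    and interval: "tn < tn1"
    and s: "s \<ge> 1"
    and Phih_poly: "Phih \<in> polyH s"
    and Phih_init: "Phih tn = Phin"
    and muh_poly: "muh \<in> polyH (s - 1)"
    and int_L: "\<And>U. U \<in> polyH (s - 1) \<Longrightarrow>
       (\<lambda>t. inner (M (Phih t) (muh t) + S (Phih t) (muh t)) (U t)) integrable_on {tn..tn1}"
    and int_M: "(\<lambda>t. inner (M (Phih t) (muh t)) (muh t)) integrable_on {tn..tn1}"
    and int_dPhi: "\<And>U. U \<in> polyH (s - 1) \<Longrightarrow>
       (\<lambda>t. inner (vector_derivative Phih (at t)) (U t)) integrable_on {tn..tn1}"
    and int_mu: "\<And>\<nu>. \<nu> \<in> polyH (s - 1) \<Longrightarrow>
       (\<lambda>t. inner (muh t) (\<nu> t)) integrable_on {tn..tn1}"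
    and int_grad: "\<And>\<nu>. \<nu> \<in> polyH (s - 1) \<Longrightarrow>
       (\<lambda>t. inner (gradF (Phih t)) (\<nu> t)) integrable_on {tn..tn1}"
    and eq1: "\<And>U. U \<in> polyH (s - 1) \<Longrightarrow>
       integral {tn..tn1} (\<lambda>t. inner (vector_derivative Phih (at t)) (U t))
     = integral {tn..tn1} (\<lambda>t. inner (M (Phih t) (muh t) + S (Phih t) (muh t)) (U t))"
    and eq2: "\<And>\<nu>. \<nu> \<in> polyH (s - 1) \<Longrightarrow>
       integral {tn..tn1} (\<lambda>t. inner (muh t) (\<nu> t))
     = integral {tn..tn1} (\<lambda>t. inner (gradF (Phih t)) (\<nu> t))"
  shows "F (Phih tn1) - F Phin = integral {tn..tn1} (\<lambda>t. inner (M (Phih t) (muh t)) (muh t))"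
proof -
  obtain c where c: "\<And>t. Phih t = (\<Sum>k\<le>s. (t ^ k) *\<^sub>R c k)"
    using Phih_poly unfolding polyH_def by auto
  define D where "D = (\<lambda>t. \<Sum>k\<le>s. (real k * t ^ (k - 1)) *\<^sub>R c k)"
  have Phih_eq: "Phih = (\<lambda>t. \<Sum>k\<le>s. (t ^ k) *\<^sub>R c k)" using c by auto
  have dv: "(Phih has_vector_derivative D t) (at t)" for t
    unfolding Phih_eq D_def by (rule poly_vderiv)
  have vd: "vector_derivative Phih (at t) = D t" for t
    using dv by (rule vector_derivative_at)
  have Dpoly: "D \<in> polyH (s - 1)" unfolding D_def using s by (rule poly_deriv_in)
  have chain: "((\<lambda>t. F (Phih t)) has_vector_derivative inner (gradF (Phih t)) (D t)) (at t)" for t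
  proof -
    have "((F \<circ> Phih) has_derivative ((\<lambda>v. inner (gradF (Phih t)) v) \<circ> (\<lambda>h. h *\<^sub>R D t))) (at t)"
      using dv[of t] grad[of "Phih t"] unfolding has_vector_derivative_def
      by (rule diff_chain_at)
    then show ?thesis unfolding has_vector_derivative_def o_def
      by (simp add: inner_scaleR_right mult.commute)
  qed
  have ftc: "((\<lambda>t. inner (gradF (Phih t)) (D t)) has_integral (F (Phih tn1) - F (Phih tn))) {tn..tn1}"
    using interval
    by (intro fundamental_theorem_of_calculus) (auto intro: has_vector_derivative_at_within chain)
  have "F (Phih tn1) - F Phin = integral {tn..tn1} (\<lambda>t. inner (gradF (Phih t)) (D t))"
    using ftc Phih_init by (simp add: integral_unique)
  also have "\<dots> = integral {tn..tn1} (\<lambda>t. inner (muh t) (D t))"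
    using eq2[OF Dpoly] by simp
  also have "\<dots> = integral {tn..tn1} (\<lambda>t. inner (vector_derivative Phih (at t)) (muh t))"
    by (simp add: vd inner_commute)
  also have "\<dots> = integral {tn..tn1} (\<lambda>t. inner (M (Phih t) (muh t) + S (Phih t) (muh t)) (muh t))"
    using eq1[OF muh_poly] .
  also have "\<dots> = integral {tn..tn1} (\<lambda>t. inner (M (Phih t) (muh t)) (muh t))"
  proof -
    have "inner (S (Phih t) (muh t)) (muh t) = 0" for t
      using S_skew[of "Phih t"] unfolding skew_symmetric_op_def
      by (metis inner_commute add.inverse_unique add_eq_0_iff2 neg_equal_zero)
    then show ?thesis by (simp add: inner_add_left)
  qed
  finally show ?thesis .
qed

end
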